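(* Define $\mathrm{Mex}(F)=\min(\mathbb{N}_0\setminus F)$ for $F\subseteq\mathbb{N}_0$, and $a+D=\{a+d:d\in D\}$. Define triples $v(n)=(v_1(n),v_2(n),v_3(n))$, $n\ge 0$, recursively by $v(0)=(0,0,0)$ and, for $n\ge 0$, with $F_n=\{v_i(k): 0\le k\le n,\ i\in\{1,2,3\}\}$ and $D_n=\bigcup_{k=0}^{n}\{v_2(k)-v_1(k),\,v_3(k)-v_2(k),\,v_3(k)-v_1(k)\}$, \[ v_1(n+1)=\mathrm{Mex}(F_n),\quad v_2(n+1)=\mathrm{Mex}\big((v_1(n+1)+D_n)\cup\{1,\dots,v_1(n+1)\}\cup F_n\big), \] \[ v_3(n+1)=\mathrm{Mex}\big((v_2(n+1)+D_n)\cup\{1,\dots,v_2(n+1)\}\cup F_n\big). \] Then the three sets $\{v_1(n): n\in\mathbb{N}\}$, $\{v_2(n): n\in\mathbb{N}\}$, $\{v_3(n): n\in\mathbb{N}\}$ are pairwise disjoint and their union is $\mathbb{N}=\{1,2,3,\dots\}$ (i.e., they form a partition of $\mathbb{N}$).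
   Context: $\mathbb{N}_0$ denotes the nonnegative integers and $\mathbb{N}=\mathbb{N}_0\setminus\{0\}$. These triples are the P-positions (sorted) of the 3D Wythoff $L^1$-Nim game. *)

theory Defs
  imports Main
begin

definition Mex :: "nat set \<Rightarrow> nat" where
  "Mex F = (LEAST m. m \<notin> F)"

(* a + D, intersected with N_0 (differences are taken in the integers) *)
definition shift :: "nat \<Rightarrow> int set \<Rightarrow> nat set" where
  "shift a D = {m. \<exists>d\<in>D. int m = int a + d}"

definition Fset :: "(nat \<times> nat \<times> nat) set \<Rightarrow> nat set" where
  "Fset T = (\<Union>(x,y,z)\<in>T. {x, y, z})"

definition Dset :: "(nat \<times> nat \<times> nat) set \<Rightarrow> int set" where
  "Dset T = (\<Union>(x,y,z)\<in>T. {int y - int x, int z - int y, int z - int x})"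

definition next_triple :: "(nat \<times> nat \<times> nat) set \<Rightarrow> nat \<times> nat \<times> nat" where
  "next_triple T =
    (let F = Fset T; D = Dset T;
         a = Mex F;
         b = Mex (shift a D \<union> {1..a} \<union> F);
         c = Mex (shift b D \<union> {1..b} \<union> F)
     in (a, b, c))"

fun vs :: "nat \<Rightarrow> (nat \<times> nat \<times> nat) list" where
  "vs 0 = [(0,0,0)]"
| "vs (Suc n) = vs n @ [next_triple (set (vs n))]"

definition v :: "nat \<Rightarrow> nat \<times> nat \<times> nat" where
  "v n = last (vs n)"

definition v1 :: "nat \<Rightarrow> nat" where "v1 n = fst (v n)"
definition v2 :: "nat \<Rightarrow> nat" where "v2 n = fst (snd (v n))"
definition v3 :: "nat \<Rightarrow> nat" where "v3 n = snd (snd (v n))"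

end

theory Submission
  imports Defs
begin

lemma Mex_notin: "finite F \<Longrightarrow> Mex F \<notin> F"
  unfolding Mex_def by (metis LeastI_ex ex_new_if_finite infinite_UNIV_nat)

lemma Mex_less: "x < Mex F \<Longrightarrow> x \<in> F"
  unfolding Mex_def using not_less_Least by blast

lemma Mex_mono: "F \<subseteq> G \<Longrightarrow> finite G \<Longrightarrow> Mex F \<le> Mex G"
  unfolding Mex_def by (metis Least_le Mex_def Mex_notin subsetD)

abbreviation T where "T n \<equiv> set (vs n)"

lemma len_vs: "length (vs n) = Suc n"
  by (induction n) auto

lemma v_Suc: "v (Suc n) = next_triple (T n)"
  unfolding v_def by simp

lemma T_Suc: "T (Suc n) = insert (v (Suc n)) (T n)"
  using v_Suc by auto

declare vs.simps(2)[simp del]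

lemma T_eq: "T n = v ` {0..n}"
proof (induction n)
  case 0 then show ?case by (simp add: v_def)
next
  case (Suc n)
  have "{0..Suc n} = insert (Suc n) {0..n}" by auto
  then show ?case using Suc T_Suc by simp
qed

lemma zero_T: "(0,0,0) \<in> T n"
  by (induction n) (auto simp: T_Suc)

lemma fin_F: "finite (Fset A)" if "finite A"
  using that unfolding Fset_def by auto

lemma fin_D: "finite (Dset A)" if "finite A"
  using that unfolding Dset_def by auto

lemma fin_shift: "finite D \<Longrightarrow> finite (shift a D)"
proof -
  assume "finite D"
  have "shift a D \<subseteq> (\<lambda>d. nat (int a + d)) ` D"
    unfolding shift_def by force
  then show ?thesis using \<open>finite D\<close> finite_subset by blast
qed

lemma next_props:
  assumes fin: "finite A" and z: "(0,0,0) \<in> A" and nt: "next_triple A = (a,b,c)"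
  shows "a \<notin> Fset A \<and> b \<notin> Fset A \<and> c \<notin> Fset A \<and> 0 < a \<and> a < b \<and> b < c \<and> Mex (Fset A) = a"
proof -
  let ?F = "Fset A" and ?D = "Dset A"
  have F0: "0 \<in> ?F" using z unfolding Fset_def by force
  have D0: "0 \<in> ?D" using z unfolding Dset_def by force
  have fF: "finite ?F" using fin fin_F by blast
  have fD: "finite ?D" using fin fin_D by blast
  have a: "a = Mex ?F" and b: "b = Mex (shift a ?D \<union> {1..a} \<union> ?F)"
    and c: "c = Mex (shift b ?D \<union> {1..b} \<union> ?F)"
    using nt unfolding next_triple_def Let_def by auto
  have aF: "a \<notin> ?F" using a Mex_notin fF by blast
  have a0: "0 < a" using aF F0 by (cases a) auto
  have bn: "b \<notin> shift a ?D \<union> {1..a} \<union> ?F"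
    using b Mex_notin fF fD fin_shift by (metis finite_Un finite_atLeastAtMost)
  have cn: "c \<notin> shift b ?D \<union> {1..b} \<union> ?F"
    using c Mex_notin fF fD fin_shift by (metis finite_Un finite_atLeastAtMost)
  have "a \<in> shift a ?D" using D0 unfolding shift_def by force
  hence ab: "a < b" using bn F0 by (cases "b = 0") auto
  have "b \<in> shift b ?D" using D0 unfolding shift_def by force
  hence bc: "b < c" using cn F0 ab by (cases "c = 0") auto
  show ?thesis using aF bn cn a0 ab bc a by auto
qed

definition C where "C n = Fset {v n}"

lemma C_eq: "C n = {v1 n, v2 n, v3 n}"
  unfolding C_def Fset_def v1_def v2_def v3_def by (cases "v n") auto

lemma F_T: "Fset (T n) = (\<Union>j\<in>{0..n}. C j)"
  unfolding T_eq C_def Fset_def by auto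

lemma props_Suc:
  "v1 (Suc n) \<notin> Fset (T n) \<and> v2 (Suc n) \<notin> Fset (T n) \<and> v3 (Suc n) \<notin> Fset (T n)
   \<and> 0 < v1 (Suc n) \<and> v1 (Suc n) < v2 (Suc n) \<and> v2 (Suc n) < v3 (Suc n)
   \<and> Mex (Fset (T n)) = v1 (Suc n)"
proof -
  obtain a b c where e: "next_triple (T n) = (a,b,c)" by (cases "next_triple (T n)") auto
  have ev: "v (Suc n) = (a,b,c)" using e v_Suc by simp
  have "a \<notin> Fset (T n) \<and> b \<notin> Fset (T n) \<and> c \<notin> Fset (T n) \<and> 0 < a \<and> a < b \<and> b < c \<and> Mex (Fset (T n)) = a"
    using next_props[OF finite_set zero_T e] .
  then show ?thesis unfolding v1_def v2_def v3_def ev by simp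
qed

lemma sep: assumes "i < j" shows "C i \<inter> C j = {}"
proof -
  obtain n where j: "j = Suc n" using assms by (cases j) auto
  have "i \<in> {0..n}" using assms j by auto
  then have "C i \<subseteq> Fset (T n)" unfolding F_T by blast
  then show ?thesis using props_Suc[of n] j C_eq by auto
qed

lemma Mex_big: "n < Mex (Fset (T n))"
proof (induction n)
  case 0
  have "Fset (T 0) = {0}" unfolding Fset_def by simp
  moreover have "0 < Mex {0}" using Mex_notin[of "{0::nat}"] by (cases "Mex {0}") auto
  ultimately show ?case by simp
next
  case (Suc n)
  have sub: "Fset (T n) \<subseteq> Fset (T (Suc n))" unfolding F_T by force
  have le: "Mex (Fset (T n)) \<le> Mex (Fset (T (Suc n)))"
    using Mex_mono[OF sub] fin_F finite_set by blast
  have "Mex (Fset (T n)) \<in> Fset (T (Suc n))"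
    using props_Suc[of n] F_T[of "Suc n"] C_eq[of "Suc n"] by auto
  hence "Mex (Fset (T n)) \<noteq> Mex (Fset (T (Suc n)))"
    using Mex_notin fin_F finite_set by metis
  then show ?case using le Suc by simp
qed

lemma pos: "n \<ge> 1 \<Longrightarrow> 0 < v1 n \<and> 0 < v2 n \<and> 0 < v3 n"
  using props_Suc[of "n - 1"] by (cases n) auto

lemma disj: assumes "i \<ge> 1" "j \<ge> 1" "x \<in> C i" "x \<in> C j" shows "i = j"
  using sep assms by (metis disjoint_iff linorder_neqE_nat)

lemma lt: "n \<ge> 1 \<Longrightarrow> v1 n < v2 n \<and> v2 n < v3 n" for n
  using props_Suc[of "n - 1"] by (cases n) auto
lemma d12: "{v1 n | n. n \<ge> 1} \<inter> {v2 n | n. n \<ge> 1} = {}"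
proof (rule ccontr)
  assume "\<not> ?thesis"
  then obtain i j where h: "i \<ge> 1" "j \<ge> 1" "v1 i = v2 j" by blast
  have "v1 i \<in> C i" "v1 i \<in> C j" using h(3) C_eq by auto
  hence "i = j" using disj[of i j "v1 i"] h by blast
  thus False using lt[of i] h by auto
qed
lemma d13: "{v1 n | n. n \<ge> 1} \<inter> {v3 n | n. n \<ge> 1} = {}"
proof (rule ccontr)
  assume "\<not> ?thesis"
  then obtain i j where h: "i \<ge> 1" "j \<ge> 1" "v1 i = v3 j" by blast
  have "v1 i \<in> C i" "v1 i \<in> C j" using h(3) C_eq by auto
  hence "i = j" using disj[of i j "v1 i"] h by blast
  thus False using lt[of i] h by auto
qed
lemma d23: "{v2 n | n. n \<ge> 1} \<inter> {v3 n | n. n \<ge> 1} = {}"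
proof (rule ccontr)
  assume "\<not> ?thesis"
  then obtain i j where h: "i \<ge> 1" "j \<ge> 1" "v2 i = v3 j" by blast
  have "v2 i \<in> C i" "v2 i \<in> C j" using h(3) C_eq by auto
  hence "i = j" using disj[of i j "v2 i"] h by blast
  thus False using lt[of i] h by auto
qed
lemma un: "{v1 n | n. n \<ge> 1} \<union> {v2 n | n. n \<ge> 1} \<union> {v3 n | n. n \<ge> 1} = {1..}"
proof
  show "{v1 n | n. n \<ge> 1} \<union> {v2 n | n. n \<ge> 1} \<union> {v3 n | n. n \<ge> 1} \<subseteq> {1..}"
  proof
    fix x assume "x \<in> {v1 n | n. n \<ge> 1} \<union> {v2 n | n. n \<ge> 1} \<union> {v3 n | n. n \<ge> 1}"
    then obtain n where "n \<ge> 1" "x = v1 n \<or> x = v2 n \<or> x = v3 n" by blast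
    thus "x \<in> {1..}" using pos[of n] by auto
  qed
next
  show "{1..} \<subseteq> {v1 n | n. n \<ge> 1} \<union> {v2 n | n. n \<ge> 1} \<union> {v3 n | n. n \<ge> 1}"
  proof
    fix k :: nat assume "k \<in> {1..}"
    hence k1: "k \<ge> 1" by simp
    have "k \<in> Fset (T k)" using Mex_big Mex_less by blast
    then obtain j where j: "j \<le> k" "k \<in> C j" using F_T by auto
    have "j \<noteq> 0"
    proof
      assume "j = 0"
      hence "C j = {0}" unfolding C_def Fset_def by (simp add: v_def)
      thus False using j k1 by simp
    qed
    hence "j \<ge> 1" by simp
    then show "k \<in> {v1 n | n. n \<ge> 1} \<union> {v2 n | n. n \<ge> 1} \<union> {v3 n | n. n \<ge> 1}"
      using j C_eq by auto
  qed
qed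

theorem corollary2:
  shows "{v1 n | n. n \<ge> 1} \<inter> {v2 n | n. n \<ge> 1} = {}
       \<and> {v1 n | n. n \<ge> 1} \<inter> {v3 n | n. n \<ge> 1} = {}
       \<and> {v2 n | n. n \<ge> 1} \<inter> {v3 n | n. n \<ge> 1} = {}
       \<and> {v1 n | n. n \<ge> 1} \<union> {v2 n | n. n \<ge> 1} \<union> {v3 n | n. n \<ge> 1} = {1..}"
  by (intro conjI d12 d13 d23 un)

end
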